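(* Let $1\le r\le s\le t$ and let $u=ABCd$, $v=A'B'C'd'$ be vertices of $E3C(r,s,t)$ with $A\ne A'$, $B=B'$, $C=C'$ and $d\ne d'$. Then there exist $2r+2$ pairwise internally disjoint $u$–$v$ paths in $E3C(r,s,t)$, each of length at most $r+8$ if $\{d,d'\}=\{0,1\}$, and each of length at most $r+6$ if $\{d,d'\}=\{0,2\}$ or $\{d,d'\}=\{1,2\}$.
   Context: The exchanged 3-ary $n$-cube $E3C(r,s,t)$ ($r,s,t\ge1$, $n=r+s+t+1$): vertices are strings written $x=ABCd$ with $A\in\{0,1,2\}^r$, $B\in\{0,1,2\}^s$, $C\in\{0,1,2\}^t$, $d\in\{0,1,2\}$. Two distinct vertices $x=ABCd$, $y=A'B'C'd'$ are adjacent iff one of: (E0) $A=A',B=B',C=C'$ and $d\ne d'$; (E1) $d=d'=0$, $A=A'$, $B=B'$ and $C,C'$ differ in exactly one position; (E2) $d=d'=1$, $A=A'$, $C=C'$ and $B,B'$ differ in exactly one position; (E3) $d=d'=2$, $B=B'$, $C=C'$ and $A,A'$ differ in exactly one position. Paths are internally disjoint if they share no vertices other than their endpoints; length = number of edges. *)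

theory Defs
  imports Main
begin

type_synonym vert = "nat list \<times> nat list \<times> nat list \<times> nat"

definition ternary_strings :: "nat \<Rightarrow> nat list set" where
  "ternary_strings k = {xs. length xs = k \<and> set xs \<subseteq> {0,1,2}}"

definition e3c_verts :: "nat \<Rightarrow> nat \<Rightarrow> nat \<Rightarrow> vert set" where
  "e3c_verts r s t = {(A,B,C,d). A \<in> ternary_strings r \<and> B \<in> ternary_strings s
                              \<and> C \<in> ternary_strings t \<and> d \<in> {0,1,2}}"

definition differ_one :: "nat list \<Rightarrow> nat list \<Rightarrow> bool" where
  "differ_one xs ys \<longleftrightarrow> length xs = length ys \<and> card {i. i < length xs \<and> xs ! i \<noteq> ys ! i} = 1"

definition e3c_adj :: "nat \<Rightarrow> nat \<Rightarrow> nat \<Rightarrow> vert \<Rightarrow> vert \<Rightarrow> bool" where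
  "e3c_adj r s t x y \<longleftrightarrow> x \<in> e3c_verts r s t \<and> y \<in> e3c_verts r s t \<and> x \<noteq> y \<and>
     (case x of (A,B,C,d) \<Rightarrow> case y of (A',B',C',d') \<Rightarrow>
        (A = A' \<and> B = B' \<and> C = C' \<and> d \<noteq> d')
      \<or> (d = 0 \<and> d' = 0 \<and> A = A' \<and> B = B' \<and> differ_one C C')
      \<or> (d = 1 \<and> d' = 1 \<and> A = A' \<and> C = C' \<and> differ_one B B')
      \<or> (d = 2 \<and> d' = 2 \<and> B = B' \<and> C = C' \<and> differ_one A A'))"

definition e3c_path :: "nat \<Rightarrow> nat \<Rightarrow> nat \<Rightarrow> vert \<Rightarrow> vert \<Rightarrow> vert list \<Rightarrow> bool" where
  "e3c_path r s t u v p \<longleftrightarrow> p \<noteq> [] \<and> hd p = u \<and> last p = v \<and> distinct p \<and>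
     (\<forall>i. Suc i < length p \<longrightarrow> e3c_adj r s t (p ! i) (p ! Suc i))"

definition path_len :: "vert list \<Rightarrow> nat" where
  "path_len p = length p - 1"

definition internally_disjoint :: "vert \<Rightarrow> vert \<Rightarrow> vert list \<Rightarrow> vert list \<Rightarrow> bool" where
  "internally_disjoint u v p q \<longleftrightarrow> set p \<inter> set q \<subseteq> {u, v}"

end

theory Submission
  imports Defs
begin
lemma card1_iff_aux: "card S = 1 \<longleftrightarrow> (\<exists>i. S = {i})"
  by (simp add: card_1_singleton_iff)

lemma differ_one_alt:
  "differ_one xs ys \<longleftrightarrow> length xs = length ys \<and>
     (\<exists>i<length xs. xs ! i \<noteq> ys ! i \<and> (\<forall>j<length xs. j \<noteq> i \<longrightarrow> xs ! j = ys ! j))"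
proof -
  let ?S = "{i. i < length xs \<and> xs ! i \<noteq> ys ! i}"
  have "(\<exists>i. ?S = {i}) \<longleftrightarrow>
     (\<exists>i<length xs. xs ! i \<noteq> ys ! i \<and> (\<forall>j<length xs. j \<noteq> i \<longrightarrow> xs ! j = ys ! j))"
  proof
    assume "\<exists>i. ?S = {i}"
    then obtain i where i: "?S = {i}" by blast
    then have "i \<in> ?S" by blast
    moreover have "\<forall>j<length xs. j \<noteq> i \<longrightarrow> xs ! j = ys ! j" using i by blast
    ultimately show "\<exists>i<length xs. xs ! i \<noteq> ys ! i \<and> (\<forall>j<length xs. j \<noteq> i \<longrightarrow> xs ! j = ys ! j)"
      by blast
  next
    assume "\<exists>i<length xs. xs ! i \<noteq> ys ! i \<and> (\<forall>j<length xs. j \<noteq> i \<longrightarrow> xs ! j = ys ! j)"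
    then obtain i where "i<length xs" "xs ! i \<noteq> ys ! i" "\<forall>j<length xs. j \<noteq> i \<longrightarrow> xs ! j = ys ! j"
      by blast
    then have "?S = {i}" by blast
    then show "\<exists>i. ?S = {i}" by blast
  qed
  then show ?thesis unfolding differ_one_def card1_iff_aux by blast
qed

lemma differ_one_sym: "differ_one xs ys \<Longrightarrow> differ_one ys xs"
  unfolding differ_one_alt by metis

lemma differ_one_Cons_same: "differ_one (x#xs) (x#ys) \<longleftrightarrow> differ_one xs ys"
proof -
  have "{i. i < length (x#xs) \<and> (x#xs) ! i \<noteq> (x#ys) ! i} = Suc ` {i. i < length xs \<and> xs ! i \<noteq> ys ! i}"
  proof (rule set_eqI)
    fix i show "i \<in> {i. i < length (x#xs) \<and> (x#xs) ! i \<noteq> (x#ys) ! i} \<longleftrightarrow> i \<in> Suc ` {i. i < length xs \<and> xs ! i \<noteq> ys ! i}"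
      by (cases i) auto
  qed
  moreover have "card (Suc ` {i. i < length xs \<and> xs ! i \<noteq> ys ! i}) = card {i. i < length xs \<and> xs ! i \<noteq> ys ! i}"
    by (simp add: card_image)
  ultimately show ?thesis unfolding differ_one_def by simp
qed

lemma differ_one_Cons_diff: "x \<noteq> y \<Longrightarrow> differ_one (x#xs) (y#xs)"
  unfolding differ_one_alt
  by (auto simp: nth_Cons split: nat.splits)

lemma differ_one_neq: "differ_one xs ys \<Longrightarrow> xs \<noteq> ys"
  unfolding differ_one_alt by auto

fun hp :: "nat list \<Rightarrow> nat list \<Rightarrow> nat list list" where
  "hp (x#xs) (y#ys) = (if x = y then map ((#) x) (hp xs ys) else (x#xs) # map ((#) y) (hp xs ys))"
| "hp _ _ = [[]]"

lemma hp_basic: "length X = length Y \<Longrightarrow> hp X Y \<noteq> [] \<and> hd (hp X Y) = X \<and> last (hp X Y) = Y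
   \<and> length (hp X Y) \<le> length X + 1 \<and> distinct (hp X Y) \<and> successively differ_one (hp X Y)"
proof (induction X Y rule: hp.induct)
  case (1 x xs y ys)
  then have IH: "hp xs ys \<noteq> [] \<and> hd (hp xs ys) = xs \<and> last (hp xs ys) = ys
   \<and> length (hp xs ys) \<le> length xs + 1 \<and> distinct (hp xs ys) \<and> successively differ_one (hp xs ys)"
    by (cases "x = y") auto
  show ?case
  proof (cases "x = y")
    case True
    then show ?thesis using IH
      by (auto simp: hd_map last_map distinct_map successively_map differ_one_Cons_same)
  next
    case False
    then show ?thesis using IH
      by (auto simp: hd_map last_map distinct_map successively_map differ_one_Cons_same
            successively_Cons differ_one_Cons_diff)
  qed
qed auto

lemma hp_elem: "Z \<in> set (hp X Y) \<Longrightarrow> length X = length Y \<Longrightarrow>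
   length Z = length X \<and> (\<forall>i<length Z. Z ! i = X ! i \<or> Z ! i = Y ! i)"
proof (induction X Y arbitrary: Z rule: hp.induct)
  case (1 x xs y ys)
  have IH: "\<And>Z. Z \<in> set (hp xs ys) \<Longrightarrow>
     length Z = length xs \<and> (\<forall>i<length Z. Z ! i = xs ! i \<or> Z ! i = ys ! i)"
    using 1 by (cases "x = y") auto
  show ?case
  proof (cases "x = y")
    case True
    show ?thesis
    proof
      show "length Z = length (x # xs)" using 1 IH True by auto
      show "\<forall>i<length Z. Z ! i = (x # xs) ! i \<or> Z ! i = (y # ys) ! i"
      proof (intro allI impI)
        fix i assume "i < length Z"
        obtain W where W: "Z = x # W" "W \<in> set (hp xs ys)" using 1 True by auto
        show "Z ! i = (x # xs) ! i \<or> Z ! i = (y # ys) ! i"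
        proof (cases i)
          case 0 then show ?thesis using W True by simp
        next
          case (Suc j)
          then have "j < length W" using \<open>i < length Z\<close> W by simp
          then show ?thesis using IH[OF W(2)] W Suc by simp
        qed
      qed
    qed
  next
    case False
    then have "Z = x # xs \<or> (\<exists>W. Z = y # W \<and> W \<in> set (hp xs ys))" using 1 by auto
    then show ?thesis
    proof
      assume "Z = x # xs" then show ?thesis using 1 by auto
    next
      assume "\<exists>W. Z = y # W \<and> W \<in> set (hp xs ys)"
      then obtain W where W: "Z = y # W" "W \<in> set (hp xs ys)" by blast
      show ?thesis
      proof
        show "length Z = length (x # xs)" using 1 IH W by auto
        show "\<forall>i<length Z. Z ! i = (x # xs) ! i \<or> Z ! i = (y # ys) ! i"
        proof (intro allI impI)
          fix i assume "i < length Z"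
          show "Z ! i = (x # xs) ! i \<or> Z ! i = (y # ys) ! i"
          proof (cases i)
            case 0 then show ?thesis using W by simp
          next
            case (Suc j)
            then have "j < length W" using \<open>i < length Z\<close> W by simp
            then show ?thesis using IH[OF W(2)] W Suc by simp
          qed
        qed
      qed
    qed
  qed
qed auto

lemma hp_tern: "Z \<in> set (hp X Y) \<Longrightarrow> set X \<subseteq> S \<Longrightarrow> set Y \<subseteq> S \<Longrightarrow> set Z \<subseteq> S"
proof (induction X arbitrary: Y Z)
  case (Cons x xs)
  then show ?case by (cases Y) (auto split: if_splits intro: Cons.IH[THEN subsetD])
qed auto


definition nb :: "nat list \<Rightarrow> nat \<times> nat \<Rightarrow> nat list" where
  "nb X k = X[fst k := (X ! fst k + snd k) mod 3]"

definition I0 :: "nat \<Rightarrow> (nat \<times> nat) set" where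
  "I0 n = {0..<n} \<times> {1,2}"

lemma card_I0: "card (I0 n) = 2 * n"
  unfolding I0_def by (simp add: card_cartesian_product)

lemma finite_I0: "finite (I0 n)"
  unfolding I0_def by simp

lemma ts_nth: "X \<in> ternary_strings n \<Longrightarrow> i < n \<Longrightarrow> X ! i \<le> 2"
  unfolding ternary_strings_def by (auto dest!: nth_mem)

lemma nb_ts: "X \<in> ternary_strings n \<Longrightarrow> k \<in> I0 m \<Longrightarrow> m \<le> n \<Longrightarrow> nb X k \<in> ternary_strings n"
  unfolding ternary_strings_def nb_def I0_def
  by (auto dest!: set_update_subset_insert[THEN subsetD])

lemma mod3_neq: "a \<le> (2::nat) \<Longrightarrow> e \<in> {1,2} \<Longrightarrow> (a + e) mod 3 \<noteq> a"
proof -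
  assume "a \<le> 2" "e \<in> {1,2}"
  then have "a = 0 \<or> a = 1 \<or> a = 2" "e = 1 \<or> e = 2" by auto
  then show ?thesis by (elim disjE) simp_all
qed

lemma nb_differ: "X \<in> ternary_strings n \<Longrightarrow> k \<in> I0 m \<Longrightarrow> m \<le> n \<Longrightarrow> differ_one X (nb X k)"
proof -
  assume X: "X \<in> ternary_strings n" and k: "k \<in> I0 m" and m: "m \<le> n"
  obtain i e where ie: "k = (i,e)" "i < m" "e \<in> {1,2}" using k unfolding I0_def by auto
  have len: "length X = n" using X unfolding ternary_strings_def by simp
  have "X ! i \<le> 2" using ts_nth[OF X] ie m by simp
  then have "(X ! i + e) mod 3 \<noteq> X ! i" using mod3_neq ie by blast
  then show ?thesis unfolding differ_one_alt nb_def using ie len m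
    by (intro conjI exI[of _ i]) auto
qed

lemma nb_neq: "X \<in> ternary_strings n \<Longrightarrow> k \<in> I0 m \<Longrightarrow> m \<le> n \<Longrightarrow> nb X k \<noteq> X"
  using nb_differ differ_one_neq by metis

lemma nb_inj: "X \<in> ternary_strings n \<Longrightarrow> k \<in> I0 m \<Longrightarrow> k' \<in> I0 m \<Longrightarrow> m \<le> n
   \<Longrightarrow> nb X k = nb X k' \<Longrightarrow> k = k'"
proof -
  assume X: "X \<in> ternary_strings n" and k: "k \<in> I0 m" and k': "k' \<in> I0 m" and m: "m \<le> n"
     and eq: "nb X k = nb X k'"
  obtain i e where ie: "k = (i,e)" "i < m" "e \<in> {1,2}" using k unfolding I0_def by auto
  obtain i' e' where ie': "k' = (i',e')" "i' < m" "e' \<in> {1,2}" using k' unfolding I0_def by auto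
  have len: "length X = n" using X unfolding ternary_strings_def by simp
  have a: "X ! i \<le> 2" using ts_nth[OF X] ie m by simp
  then have ne: "(X ! i + e) mod 3 \<noteq> X ! i" using mod3_neq ie by blast
  have e1: "nb X k ! i = (X ! i + e) mod 3" using ie len m unfolding nb_def by simp
  show "k = k'"
  proof (cases "i = i'")
    case False
    then have "nb X k' ! i = X ! i" using ie' unfolding nb_def by simp
    then show ?thesis using e1 ne eq by simp
  next
    case True
    then have "nb X k' ! i = (X ! i + e') mod 3" using ie' len m unfolding nb_def by simp
    then have "(X ! i + e) mod 3 = (X ! i + e') mod 3" using e1 eq by simp
    moreover have "X ! i = 0 \<or> X ! i = 1 \<or> X ! i = 2" using a by auto
    moreover have "e = 1 \<or> e = 2" "e' = 1 \<or> e' = 2" using ie ie' by auto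
    ultimately have "e = e'" by auto
    then show ?thesis using True ie ie' by simp
  qed
qed

lemma e3c_path_alt: "e3c_path r s t u v p \<longleftrightarrow> p \<noteq> [] \<and> hd p = u \<and> last p = v \<and> distinct p \<and>
     successively (e3c_adj r s t) p"
  unfolding e3c_path_def successively_conv_nth by blast

lemma adj_sym: "e3c_adj r s t x y \<Longrightarrow> e3c_adj r s t y x"
proof -
  assume a: "e3c_adj r s t x y"
  obtain A B C d where x: "x = (A,B,C,d)" by (cases x)
  obtain A' B' C' d' where y: "y = (A',B',C',d')" by (cases y)
  have v: "x \<in> e3c_verts r s t" "y \<in> e3c_verts r s t" "x \<noteq> y" using a unfolding e3c_adj_def by auto
  have "(A = A' \<and> B = B' \<and> C = C' \<and> d \<noteq> d')
      \<or> (d = 0 \<and> d' = 0 \<and> A = A' \<and> B = B' \<and> differ_one C C')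
      \<or> (d = 1 \<and> d' = 1 \<and> A = A' \<and> C = C' \<and> differ_one B B')
      \<or> (d = 2 \<and> d' = 2 \<and> B = B' \<and> C = C' \<and> differ_one A A')"
    using a unfolding e3c_adj_def x y by simp
  then have "(A' = A \<and> B' = B \<and> C' = C \<and> d' \<noteq> d)
      \<or> (d' = 0 \<and> d = 0 \<and> A' = A \<and> B' = B \<and> differ_one C' C)
      \<or> (d' = 1 \<and> d = 1 \<and> A' = A \<and> C' = C \<and> differ_one B' B)
      \<or> (d' = 2 \<and> d = 2 \<and> B' = B \<and> C' = C \<and> differ_one A' A)"
    using differ_one_sym by blast
  then show ?thesis using v unfolding e3c_adj_def x y by auto
qed

lemma not_adj: "A \<noteq> A' \<Longrightarrow> d \<noteq> d' \<Longrightarrow> \<not> e3c_adj r s t (A,B,C,d) (A',B,C,d')"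
  unfolding e3c_adj_def by auto

lemma path_neq:
  assumes "e3c_path r s t u v p" "e3c_path r s t u v q" "internally_disjoint u v p q"
    "\<not> e3c_adj r s t u v" "u \<noteq> v"
  shows "p \<noteq> q"
proof
  assume pq: "p = q"
  have P: "p \<noteq> []" "hd p = u" "last p = v" "distinct p" and S: "successively (e3c_adj r s t) p"
    using assms(1) unfolding e3c_path_alt by auto
  have sub: "set p \<subseteq> {u, v}" using assms(3) pq unfolding internally_disjoint_def by auto
  have "length p \<noteq> 1"
  proof
    assume "length p = 1"
    then obtain a where "p = [a]" by (cases p) auto
    then show False using P assms(5) by simp
  qed
  then have l2: "1 < length p" using P by (cases p) auto
  have p0: "p ! 0 = u" using P by (simp add: hd_conv_nth)
  have "p ! 1 \<in> set p" using l2 by simp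
  moreover have "p ! 1 \<noteq> p ! 0" using P(4) l2 by (subst nth_eq_iff_index_eq) auto
  ultimately have "p ! 1 = v" using sub p0 by auto
  moreover have "e3c_adj r s t (p ! 0) (p ! Suc 0)" using successively_nth[OF S, of 0] l2 by simp
  ultimately show False using assms(4) p0 by simp
qed

definition good :: "nat \<Rightarrow> nat \<Rightarrow> nat \<Rightarrow> vert \<Rightarrow> vert \<Rightarrow> nat \<Rightarrow> vert list set \<Rightarrow> bool" where
  "good r s t u v L P \<longleftrightarrow> card P = 2 * r + 2 \<and> (\<forall>p\<in>P. e3c_path r s t u v p) \<and>
     (\<forall>p\<in>P. \<forall>q\<in>P. p \<noteq> q \<longrightarrow> internally_disjoint u v p q) \<and> (\<forall>p\<in>P. path_len p \<le> L)"

lemma good_rev: "good r s t u v L P \<Longrightarrow> good r s t v u L (rev ` P)"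
proof -
  assume g: "good r s t u v L P"
  have "card (rev ` P) = card P" by (simp add: card_image)
  moreover have "\<forall>p\<in>rev ` P. e3c_path r s t v u p"
    using g unfolding good_def e3c_path_alt
    by (auto simp: hd_rev last_rev intro: successively_mono adj_sym)
  moreover have "\<forall>p\<in>rev ` P. \<forall>q\<in>rev ` P. p \<noteq> q \<longrightarrow> internally_disjoint v u p q"
    using g unfolding good_def internally_disjoint_def by auto
  moreover have "\<forall>p\<in>rev ` P. path_len p \<le> L"
    using g unfolding good_def path_len_def by auto
  ultimately show ?thesis unfolding good_def using g unfolding good_def by simp
qed

definition sw :: "nat \<Rightarrow> nat" where "sw d = (if d = 0 then 1 else if d = 1 then 0 else d)"

definition sig :: "vert \<Rightarrow> vert" where "sig x = (case x of (A,B,C,d) \<Rightarrow> (A,C,B,sw d))"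

lemma sig_simp[simp]: "sig (A,B,C,d) = (A,C,B,sw d)"
  unfolding sig_def by simp

lemma sw_vals[simp]: "sw 0 = 1" "sw 1 = 0" "sw 2 = 2" "sw (Suc 0) = 0"
  unfolding sw_def by auto

lemma sw_sw[simp]: "sw (sw d) = d"
  unfolding sw_def by auto

lemma sig_sig: "sig (sig x) = x"
  by (cases x) simp

lemma sig_inj: "inj sig"
  by (metis injI sig_sig)

lemma sig_verts: "x \<in> e3c_verts r t s \<Longrightarrow> sig x \<in> e3c_verts r s t"
  unfolding e3c_verts_def by (cases x) auto

lemma sig_adj: "e3c_adj r t s x y \<Longrightarrow> e3c_adj r s t (sig x) (sig y)"
proof -
  assume a: "e3c_adj r t s x y"
  obtain A B C d where x: "x = (A,B,C,d)" by (cases x)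
  obtain A' B' C' d' where y: "y = (A',B',C',d')" by (cases y)
  have n: "sig x \<noteq> sig y" using a sig_inj unfolding e3c_adj_def by (auto dest: injD)
  have v: "sig x \<in> e3c_verts r s t" "sig y \<in> e3c_verts r s t" using a sig_verts unfolding e3c_adj_def by auto
  have "(A = A' \<and> B = B' \<and> C = C' \<and> d \<noteq> d')
      \<or> (d = 0 \<and> d' = 0 \<and> A = A' \<and> B = B' \<and> differ_one C C')
      \<or> (d = 1 \<and> d' = 1 \<and> A = A' \<and> C = C' \<and> differ_one B B')
      \<or> (d = 2 \<and> d' = 2 \<and> B = B' \<and> C = C' \<and> differ_one A A')"
    using a unfolding e3c_adj_def x y by simp
  then have "(A = A' \<and> C = C' \<and> B = B' \<and> sw d \<noteq> sw d')
      \<or> (sw d = 0 \<and> sw d' = 0 \<and> A = A' \<and> C = C' \<and> differ_one B B')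
      \<or> (sw d = 1 \<and> sw d' = 1 \<and> A = A' \<and> B = B' \<and> differ_one C C')
      \<or> (sw d = 2 \<and> sw d' = 2 \<and> B = B' \<and> C = C' \<and> differ_one A A')"
    unfolding sw_def by auto
  then show ?thesis using n v unfolding e3c_adj_def x y by auto
qed

lemma good_sig: "good r t s u v L P \<Longrightarrow> good r s t (sig u) (sig v) L (map sig ` P)"
proof -
  assume g: "good r t s u v L P"
  have im: "inj (map sig)" using sig_inj by (simp add: inj_mapI)
  have "card (map sig ` P) = card P" using im by (meson card_image inj_on_subset subset_UNIV)
  moreover have "e3c_path r s t (sig u) (sig v) p" if pin: "p \<in> map sig ` P" for p
  proof -
    obtain p0 where p0: "p0 \<in> P" "p = map sig p0" using pin by blast
    then have "e3c_path r t s u v p0" using g unfolding good_def by blast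
    then have h: "p0 \<noteq> []" "hd p0 = u" "last p0 = v" "distinct p0" "successively (e3c_adj r t s) p0"
      unfolding e3c_path_alt by auto
    have "successively (e3c_adj r s t) p"
      unfolding p0(2) successively_map by (rule successively_mono[OF h(5)]) (rule sig_adj)
    moreover have "distinct p" unfolding p0(2) using h(4) inj_on_subset[OF sig_inj subset_UNIV]
      by (simp add: distinct_map)
    ultimately show ?thesis unfolding e3c_path_alt p0(2) using h by (simp add: hd_map last_map)
  qed
  moreover have "\<forall>p\<in>map sig ` P. \<forall>q\<in>map sig ` P. p \<noteq> q \<longrightarrow> internally_disjoint (sig u) (sig v) p q"
  proof (intro ballI impI)
    fix p q assume "p \<in> map sig ` P" "q \<in> map sig ` P" "p \<noteq> q"
    then obtain p0 q0 where pq: "p0 \<in> P" "q0 \<in> P" "p = map sig p0" "q = map sig q0" "p0 \<noteq> q0" by auto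
    then have "set p0 \<inter> set q0 \<subseteq> {u, v}" using g unfolding good_def internally_disjoint_def by auto
    moreover have "set p \<inter> set q = sig ` (set p0 \<inter> set q0)" using pq sig_inj
      by (simp add: image_Int)
    ultimately show "internally_disjoint (sig u) (sig v) p q" unfolding internally_disjoint_def
      by auto
  qed
  moreover have "\<forall>p\<in>map sig ` P. path_len p \<le> L"
    using g unfolding good_def path_len_def by auto
  ultimately show ?thesis unfolding good_def using g unfolding good_def by simp
qed

definition seg :: "nat list \<Rightarrow> nat list \<Rightarrow> nat list \<Rightarrow> nat list \<Rightarrow> vert list" where
  "seg B C X Y = map (\<lambda>Z. (Z,B,C,2)) (hp X Y)"

lemma verts_iff[simp]: "(A,B,C,d) \<in> e3c_verts r s t \<longleftrightarrow>
   A \<in> ternary_strings r \<and> B \<in> ternary_strings s \<and> C \<in> ternary_strings t \<and> d \<in> {0,1,2}"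
  unfolding e3c_verts_def by simp

lemma adjE0: "A \<in> ternary_strings r \<Longrightarrow> B \<in> ternary_strings s \<Longrightarrow> C \<in> ternary_strings t \<Longrightarrow>
   d \<in> {0,1,2} \<Longrightarrow> d' \<in> {0,1,2} \<Longrightarrow> d \<noteq> d' \<Longrightarrow> e3c_adj r s t (A,B,C,d) (A,B,C,d')"
  unfolding e3c_adj_def by simp

lemma adjE1: "A \<in> ternary_strings r \<Longrightarrow> B \<in> ternary_strings s \<Longrightarrow> C \<in> ternary_strings t \<Longrightarrow>
   C' \<in> ternary_strings t \<Longrightarrow> differ_one C C' \<Longrightarrow> e3c_adj r s t (A,B,C,0) (A,B,C',0)"
  unfolding e3c_adj_def using differ_one_neq by simp

lemma adjE2: "A \<in> ternary_strings r \<Longrightarrow> B \<in> ternary_strings s \<Longrightarrow> C \<in> ternary_strings t \<Longrightarrow>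
   B' \<in> ternary_strings s \<Longrightarrow> differ_one B B' \<Longrightarrow> e3c_adj r s t (A,B,C,1) (A,B',C,1)"
  unfolding e3c_adj_def using differ_one_neq by simp

lemma adjE2': "A \<in> ternary_strings r \<Longrightarrow> B \<in> ternary_strings s \<Longrightarrow> C \<in> ternary_strings t \<Longrightarrow>
   B' \<in> ternary_strings s \<Longrightarrow> differ_one B B' \<Longrightarrow> e3c_adj r s t (A,B,C,Suc 0) (A,B',C,Suc 0)"
  using adjE2 by simp

lemma adjE3: "A \<in> ternary_strings r \<Longrightarrow> B \<in> ternary_strings s \<Longrightarrow> C \<in> ternary_strings t \<Longrightarrow>
   A' \<in> ternary_strings r \<Longrightarrow> differ_one A A' \<Longrightarrow> e3c_adj r s t (A,B,C,2) (A',B,C,2)"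
  unfolding e3c_adj_def using differ_one_neq by simp

lemma hp_ts: "Z \<in> set (hp X Y) \<Longrightarrow> X \<in> ternary_strings r \<Longrightarrow> Y \<in> ternary_strings r \<Longrightarrow> Z \<in> ternary_strings r"
  using hp_elem[of Z X Y] hp_tern[of Z X Y "{0,1,2}"] unfolding ternary_strings_def by auto

lemma seg_props:
  assumes X: "X \<in> ternary_strings r" and Y: "Y \<in> ternary_strings r"
    and B: "B \<in> ternary_strings s" and C: "C \<in> ternary_strings t"
  shows "seg B C X Y \<noteq> []" "hd (seg B C X Y) = (X,B,C,2)" "last (seg B C X Y) = (Y,B,C,2)"
    "distinct (seg B C X Y)" "successively (e3c_adj r s t) (seg B C X Y)"
    "length (seg B C X Y) \<le> r + 1" "set (seg B C X Y) = (\<lambda>Z. (Z,B,C,2)) ` set (hp X Y)"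
proof -
  have len: "length X = length Y" "length X = r" using X Y unfolding ternary_strings_def by auto
  note h = hp_basic[OF len(1)]
  show "seg B C X Y \<noteq> []" "hd (seg B C X Y) = (X,B,C,2)" "last (seg B C X Y) = (Y,B,C,2)"
    "length (seg B C X Y) \<le> r + 1" "set (seg B C X Y) = (\<lambda>Z. (Z,B,C,2)) ` set (hp X Y)"
    using h len unfolding seg_def by (auto simp: hd_map last_map)
  show "distinct (seg B C X Y)" using h unfolding seg_def by (simp add: distinct_map inj_on_def)
  have "successively (\<lambda>Z W. e3c_adj r s t (Z,B,C,2) (W,B,C,2)) (hp X Y)"
  proof (rule successively_mono[OF conjunct2[OF conjunct2[OF conjunct2[OF conjunct2[OF conjunct2[OF h]]]]]])
    fix Z W assume "Z \<in> set (hp X Y)" "W \<in> set (hp X Y)" "differ_one Z W"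
    then show "e3c_adj r s t (Z,B,C,2) (W,B,C,2)"
      using adjE3 hp_ts X Y B C by blast
  qed
  then show "successively (e3c_adj r s t) (seg B C X Y)" unfolding seg_def successively_map .
qed

lemma mk_path:
  assumes "successively (e3c_adj r s t) xs" "successively (e3c_adj r s t) ys" "xs \<noteq> []" "ys \<noteq> []"
    "S \<noteq> []" "successively (e3c_adj r s t) S" "e3c_adj r s t (last xs) (hd S)"
    "e3c_adj r s t (last S) (hd ys)" "distinct (xs @ S @ ys)" "hd xs = u" "last ys = v"
  shows "e3c_path r s t u v (xs @ S @ ys)"
  unfolding e3c_path_alt using assms by (simp add: successively_append_iff)

lemma mod3_aux: "a \<le> (2::nat) \<Longrightarrow> b \<le> 2 \<Longrightarrow> a \<noteq> b \<Longrightarrow>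
   (a + (b + 3 - a) mod 3) mod 3 = b \<and> (b + 3 - a) mod 3 \<in> {1,2}"
proof -
  assume "a \<le> 2" "b \<le> 2" "a \<noteq> b"
  then have "a = 0 \<or> a = 1 \<or> a = 2" "b = 0 \<or> b = 1 \<or> b = 2" by auto
  then show ?thesis using \<open>a \<noteq> b\<close> by (elim disjE) simp_all
qed

definition pX :: "nat list \<Rightarrow> nat list \<Rightarrow> nat list \<Rightarrow> nat list \<Rightarrow> nat \<times> nat \<Rightarrow> vert list" where
  "pX A A' B C k = [(A,B,C,2), (nb A k,B,C,2), (nb A k,B,C,0), (nb A k,B,nb C k,0)]
     @ seg B (nb C k) (nb A k) A' @ [(A',B,nb C k,0), (A',B,C,0)]"

definition pZ :: "nat list \<Rightarrow> nat list \<Rightarrow> nat list \<Rightarrow> nat list \<Rightarrow> nat \<times> nat \<Rightarrow> vert list" where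
  "pZ A A' B C k = [(A,B,C,2), (A,B,C,0), (A,B,nb C k,0)]
     @ seg B (nb C k) A A' @ [(A',B,nb C k,0), (A',B,C,0)]"

definition pB :: "nat list \<Rightarrow> nat list \<Rightarrow> nat list \<Rightarrow> nat list \<Rightarrow> vert list" where
  "pB A A' B C = [(A,B,C,2), (A,B,C,1), (A,nb B (0,1),C,1)]
     @ seg (nb B (0,1)) C A A' @ [(A',nb B (0,1),C,1), (A',B,C,1), (A',B,C,0)]"

definition pD :: "nat list \<Rightarrow> nat list \<Rightarrow> nat list \<Rightarrow> nat list \<Rightarrow> nat list \<Rightarrow> vert list" where
  "pD A A' B C X0 = [(A,B,C,2)] @ seg B C X0 A' @ [(A',B,C,0)]"

context
  fixes r s t :: nat and A A' B C :: "nat list"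
  assumes r1: "1 \<le> r" and rt: "r \<le> t" and s1: "1 \<le> s"
    and A: "A \<in> ternary_strings r" and A': "A' \<in> ternary_strings r"
    and B: "B \<in> ternary_strings s" and C: "C \<in> ternary_strings t" and AA: "A \<noteq> A'"
begin

lemma nbA: "k \<in> I0 r \<Longrightarrow> nb A k \<in> ternary_strings r"
  using nb_ts[OF A] by blast

lemma nbC: "k \<in> I0 r \<Longrightarrow> nb C k \<in> ternary_strings t"
  using nb_ts[OF C] rt by blast

lemma k01: "(0,1) \<in> I0 s"
  using s1 unfolding I0_def by auto

lemma nbB: "nb B (0,1) \<in> ternary_strings s"
  using nb_ts[OF B k01] by blast

lemma dA: "k \<in> I0 r \<Longrightarrow> differ_one A (nb A k)"
  using nb_differ[OF A] by blast

lemma dC: "k \<in> I0 r \<Longrightarrow> differ_one C (nb C k)"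
  using nb_differ[OF C] rt by blast

lemma dB: "differ_one B (nb B (0,1))"
  using nb_differ[OF B k01] by blast

lemma dB': "differ_one B (nb B (0,Suc 0))"
  using dB by simp

lemma nbB': "nb B (0,Suc 0) \<in> ternary_strings s"
  using nbB by simp

lemma neA: "k \<in> I0 r \<Longrightarrow> nb A k \<noteq> A"
  using nb_neq[OF A] by blast

lemma neC: "k \<in> I0 r \<Longrightarrow> nb C k \<noteq> C"
  using nb_neq[OF C] rt by blast

lemma neB: "nb B (0,1) \<noteq> B"
  using nb_neq[OF B k01] by blast

lemma injA: "k \<in> I0 r \<Longrightarrow> k' \<in> I0 r \<Longrightarrow> nb A k = nb A k' \<longleftrightarrow> k = k'"
  using nb_inj[OF A] by blast

lemma injC: "k \<in> I0 r \<Longrightarrow> k' \<in> I0 r \<Longrightarrow> nb C k = nb C k' \<longleftrightarrow> k = k'"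
  using nb_inj[OF C] rt by blast

lemma pX_path: "k \<in> I0 r \<Longrightarrow> nb A k \<noteq> A' \<Longrightarrow> e3c_path r s t (A,B,C,2) (A',B,C,0) (pX A A' B C k)"
proof -
  assume k: "k \<in> I0 r" and kA: "nb A k \<noteq> A'"
  note sp = seg_props[OF nbA[OF k] A' B nbC[OF k]]
  show ?thesis unfolding pX_def
  proof (rule mk_path)
    show "successively (e3c_adj r s t) [(A,B,C,2), (nb A k,B,C,2), (nb A k,B,C,0), (nb A k,B,nb C k,0)]"
      using k by (simp add: adjE0 adjE1 adjE3 A B C nbA nbC dA dC)
    show "successively (e3c_adj r s t) [(A',B,nb C k,0), (A',B,C,0)]"
      using k by (simp add: adjE1 A' B C nbC dC differ_one_sym)
    show "e3c_adj r s t (last [(A,B,C,2), (nb A k,B,C,2), (nb A k,B,C,0), (nb A k,B,nb C k,0)])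
       (hd (seg B (nb C k) (nb A k) A'))"
      using k sp by (simp add: adjE0 B nbA nbC)
    show "e3c_adj r s t (last (seg B (nb C k) (nb A k) A')) (hd [(A',B,nb C k,0), (A',B,C,0)])"
      using k sp by (simp add: adjE0 A' B nbC)
    show "distinct ([(A,B,C,2), (nb A k,B,C,2), (nb A k,B,C,0), (nb A k,B,nb C k,0)]
       @ seg B (nb C k) (nb A k) A' @ [(A',B,nb C k,0), (A',B,C,0)])"
      using k sp neA[OF k] neC[OF k] AA kA by auto
  qed (use sp in auto)
qed

lemma pX_len: "k \<in> I0 r \<Longrightarrow> path_len (pX A A' B C k) \<le> r + 6"
  using seg_props(6)[OF nbA A' B nbC, of k k] unfolding pX_def path_len_def by simp

lemma pZ_path: "k \<in> I0 r \<Longrightarrow> e3c_path r s t (A,B,C,2) (A',B,C,0) (pZ A A' B C k)"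
proof -
  assume k: "k \<in> I0 r"
  note sp = seg_props[OF A A' B nbC[OF k]]
  show ?thesis unfolding pZ_def
  proof (rule mk_path)
    show "successively (e3c_adj r s t) [(A,B,C,2), (A,B,C,0), (A,B,nb C k,0)]"
      using k by (simp add: adjE0 adjE1 A B C nbC dC)
    show "successively (e3c_adj r s t) [(A',B,nb C k,0), (A',B,C,0)]"
      using k by (simp add: adjE1 A' B C nbC dC differ_one_sym)
    show "e3c_adj r s t (last [(A,B,C,2), (A,B,C,0), (A,B,nb C k,0)]) (hd (seg B (nb C k) A A'))"
      using k sp by (simp add: adjE0 A B nbC)
    show "e3c_adj r s t (last (seg B (nb C k) A A')) (hd [(A',B,nb C k,0), (A',B,C,0)])"
      using k sp by (simp add: adjE0 A' B nbC)
    show "distinct ([(A,B,C,2), (A,B,C,0), (A,B,nb C k,0)]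
       @ seg B (nb C k) A A' @ [(A',B,nb C k,0), (A',B,C,0)])"
      using k sp neC[OF k] AA by auto
  qed (use sp in auto)
qed

lemma pZ_len: "k \<in> I0 r \<Longrightarrow> path_len (pZ A A' B C k) \<le> r + 6"
  using seg_props(6)[OF A A' B nbC, of k] unfolding pZ_def path_len_def by simp

lemma pB_path: "e3c_path r s t (A,B,C,2) (A',B,C,0) (pB A A' B C)"
proof -
  note sp = seg_props[OF A A' nbB C]
  show ?thesis unfolding pB_def
  proof (rule mk_path)
    show "successively (e3c_adj r s t) [(A,B,C,2), (A,B,C,1), (A,nb B (0,1),C,1)]"
      by (simp add: adjE0 adjE2 adjE2' A B C nbB dB nbB' dB')
    show "successively (e3c_adj r s t) [(A',nb B (0,1),C,1), (A',B,C,1), (A',B,C,0)]"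
      by (simp add: adjE0 adjE2 adjE2' A' B C nbB dB nbB' dB' differ_one_sym)
    show "e3c_adj r s t (last [(A,B,C,2), (A,B,C,1), (A,nb B (0,1),C,1)]) (hd (seg (nb B (0,1)) C A A'))"
      using sp by (simp add: adjE0 A C nbB nbB')
    show "e3c_adj r s t (last (seg (nb B (0,1)) C A A')) (hd [(A',nb B (0,1),C,1), (A',B,C,1), (A',B,C,0)])"
      using sp by (simp add: adjE0 A' C nbB nbB')
    show "distinct ([(A,B,C,2), (A,B,C,1), (A,nb B (0,1),C,1)]
       @ seg (nb B (0,1)) C A A' @ [(A',nb B (0,1),C,1), (A',B,C,1), (A',B,C,0)])"
      using sp neB AA by auto
  qed (use sp in auto)
qed

lemma pB_len: "path_len (pB A A' B C) \<le> r + 6"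
  using seg_props(6)[OF A A' nbB C] unfolding pB_def path_len_def by simp

lemma exists_k0: "\<exists>k0 \<in> I0 r. \<forall>Z \<in> set (hp (nb A k0) A'). Z \<noteq> A \<and> (\<forall>k\<in>I0 r. Z = nb A k \<longrightarrow> k = k0)"
proof -
  have lA: "length A = r" and lA': "length A' = r" using A A' unfolding ternary_strings_def by auto
  obtain i0 where i0: "i0 < r" "A ! i0 \<noteq> A' ! i0"
    using AA lA lA' nth_equalityI by metis
  define a where "a = A ! i0"
  define b where "b = A' ! i0"
  have ab: "a \<le> 2" "b \<le> 2" "a \<noteq> b" using ts_nth[OF A i0(1)] ts_nth[OF A' i0(1)] i0 a_def b_def by auto
  define e0 where "e0 = (b + 3 - a) mod 3"
  have e0: "(a + e0) mod 3 = b" "e0 \<in> {1,2}" using mod3_aux[OF ab] e0_def by auto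
  define k0 where "k0 = (i0, e0)"
  have k0: "k0 \<in> I0 r" using i0 e0 unfolding k0_def I0_def by auto
  have nk0: "nb A k0 = A[i0 := b]" unfolding nb_def k0_def using e0 a_def by simp
  have lk0: "length (nb A k0) = length A'" using nk0 lA lA' by simp
  have "Z \<noteq> A \<and> (\<forall>k\<in>I0 r. Z = nb A k \<longrightarrow> k = k0)" if Z: "Z \<in> set (hp (nb A k0) A')" for Z
  proof -
    note he = hp_elem[OF Z lk0]
    have lZ: "length Z = r" using he nk0 lA by simp
    have Zi0: "Z ! i0 = b" using he i0 lZ nk0 lA b_def by auto
    have "Z \<noteq> A" using Zi0 ab a_def by auto
    moreover have "k = k0" if k: "k \<in> I0 r" and Zk: "Z = nb A k" for k
    proof -
      obtain i e where ie: "k = (i,e)" "i < r" "e \<in> {1,2}" using k unfolding I0_def by auto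
      have "i = i0"
      proof (rule ccontr)
        assume "i \<noteq> i0"
        then have "Z ! i0 = A ! i0" using Zk ie unfolding nb_def by simp
        then show False using Zi0 ab a_def by simp
      qed
      then have "Z = A[i0 := Z ! i0]" using Zk ie lA unfolding nb_def by simp
      then have "nb A k = nb A k0" using Zk Zi0 nk0 by simp
      then show ?thesis using injA k k0 by blast
    qed
    ultimately show ?thesis by blast
  qed
  then show ?thesis using k0 by blast
qed

lemma pD_path: "k0 \<in> I0 r \<Longrightarrow> A \<notin> set (hp (nb A k0) A') \<Longrightarrow>
   e3c_path r s t (A,B,C,2) (A',B,C,0) (pD A A' B C (nb A k0))"
proof -
  assume k: "k0 \<in> I0 r" and nA: "A \<notin> set (hp (nb A k0) A')"
  note sp = seg_props[OF nbA[OF k] A' B C]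
  show ?thesis unfolding pD_def
  proof (rule mk_path)
    show "e3c_adj r s t (last [(A,B,C,2)]) (hd (seg B C (nb A k0) A'))"
      using k sp by (simp add: adjE3 A B C nbA dA)
    show "e3c_adj r s t (last (seg B C (nb A k0) A')) (hd [(A',B,C,0)])"
      using k sp by (simp add: adjE0 A' B C)
    show "distinct ([(A,B,C,2)] @ seg B C (nb A k0) A' @ [(A',B,C,0)])"
      using k sp nA by auto
  qed (use sp in auto)
qed

lemma pD_len: "k0 \<in> I0 r \<Longrightarrow> path_len (pD A A' B C (nb A k0)) \<le> r + 6"
  using seg_props(6)[OF nbA A' B C, of k0] unfolding pD_def path_len_def by simp

lemma dXX: "k \<in> I0 r \<Longrightarrow> k' \<in> I0 r \<Longrightarrow> k \<noteq> k' \<Longrightarrow>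
  internally_disjoint (A,B,C,2) (A',B,C,0) (pX A A' B C k) (pX A A' B C k')"
proof -
  assume k: "k \<in> I0 r" and k': "k' \<in> I0 r" and kk: "k \<noteq> k'"
  have f: "nb A k \<noteq> nb A k'" "nb C k \<noteq> nb C k'" using injA[OF k k'] injC[OF k k'] kk by auto
  show ?thesis unfolding internally_disjoint_def pX_def seg_def
    using f neA[OF k] neA[OF k'] neC[OF k] neC[OF k'] AA by auto
qed

lemma dXZ: "k \<in> I0 r \<Longrightarrow> k' \<in> I0 r \<Longrightarrow> k \<noteq> k' \<Longrightarrow>
  internally_disjoint (A,B,C,2) (A',B,C,0) (pX A A' B C k) (pZ A A' B C k')"
proof -
  assume k: "k \<in> I0 r" and k': "k' \<in> I0 r" and kk: "k \<noteq> k'"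
  have f: "nb A k \<noteq> nb A k'" "nb C k \<noteq> nb C k'" using injA[OF k k'] injC[OF k k'] kk by auto
  show ?thesis unfolding internally_disjoint_def pX_def pZ_def seg_def
    using f neA[OF k] neA[OF k'] neC[OF k] neC[OF k'] AA by auto
qed

lemma dXB: "k \<in> I0 r \<Longrightarrow>
  internally_disjoint (A,B,C,2) (A',B,C,0) (pX A A' B C k) (pB A A' B C)"
proof -
  assume k: "k \<in> I0 r"
  show ?thesis unfolding internally_disjoint_def pX_def pB_def seg_def
    using neA[OF k] neC[OF k] neB AA by auto
qed

lemma dZB: "k \<in> I0 r \<Longrightarrow>
  internally_disjoint (A,B,C,2) (A',B,C,0) (pZ A A' B C k) (pB A A' B C)"
proof -
  assume k: "k \<in> I0 r"
  show ?thesis unfolding internally_disjoint_def pZ_def pB_def seg_def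
    using neC[OF k] neB AA by auto
qed

lemma dXD: "k \<in> I0 r \<Longrightarrow> k0 \<in> I0 r \<Longrightarrow> nb A k \<notin> set (hp (nb A k0) A') \<Longrightarrow>
  internally_disjoint (A,B,C,2) (A',B,C,0) (pX A A' B C k) (pD A A' B C (nb A k0))"
proof -
  assume k: "k \<in> I0 r" and k0: "k0 \<in> I0 r" and nk: "nb A k \<notin> set (hp (nb A k0) A')"
  show ?thesis unfolding internally_disjoint_def pX_def pD_def seg_def
    using neA[OF k] neC[OF k] nk AA by auto
qed

lemma dZD: "k \<in> I0 r \<Longrightarrow>
  internally_disjoint (A,B,C,2) (A',B,C,0) (pZ A A' B C k) (pD A A' B C X0)"
proof -
  assume k: "k \<in> I0 r"
  show ?thesis unfolding internally_disjoint_def pZ_def pD_def seg_def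
    using neC[OF k] AA by auto
qed

lemma dBD: "internally_disjoint (A,B,C,2) (A',B,C,0) (pB A A' B C) (pD A A' B C X0)"
  unfolding internally_disjoint_def pB_def pD_def seg_def using neB AA by auto

lemma caseI: "\<exists>P. good r s t (A,B,C,2) (A',B,C,0) (r+6) P"
proof -
  obtain k0 where k0: "k0 \<in> I0 r"
    and HK: "\<forall>Z \<in> set (hp (nb A k0) A'). Z \<noteq> A \<and> (\<forall>k\<in>I0 r. Z = nb A k \<longrightarrow> k = k0)"
    using exists_k0 by blast
  define u where "u = (A,B,C,2::nat)"
  define v where "v = (A',B,C,0::nat)"
  define D where "D = pD A A' B C (nb A k0)"
  define Zp where "Zp = pZ A A' B C k0"
  define Bp where "Bp = pB A A' B C"
  define J where "J = I0 r - {k0}"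
  define XS where "XS = pX A A' B C ` J"
  define P where "P = insert D (insert Zp (insert Bp XS))"
  have lA: "length (nb A k0) = length A'" using nbA[OF k0] A' unfolding ternary_strings_def by simp
  have A'in: "A' \<in> set (hp (nb A k0) A')" using hp_basic[OF lA] last_in_set by metis
  have nA: "A \<notin> set (hp (nb A k0) A')" using HK by blast
  have J: "k \<in> I0 r" "k \<noteq> k0" if "k \<in> J" for k using that unfolding J_def by auto
  have nkA: "nb A k \<notin> set (hp (nb A k0) A')" if "k \<in> J" for k
    using HK J[OF that] by blast
  have kA': "nb A k \<noteq> A'" if "k \<in> J" for k
    using nkA[OF that] A'in by metis
  have pathX: "e3c_path r s t u v (pX A A' B C k)" if "k \<in> J" for k
    unfolding u_def v_def using pX_path J[OF that] kA'[OF that] by blast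
  have pathD: "e3c_path r s t u v D" unfolding u_def v_def D_def using pD_path k0 nA by blast
  have pathZ: "e3c_path r s t u v Zp" unfolding u_def v_def Zp_def using pZ_path k0 by blast
  have pathB: "e3c_path r s t u v Bp" unfolding u_def v_def Bp_def using pB_path by blast
  have nadj: "\<not> e3c_adj r s t u v" "u \<noteq> v" unfolding u_def v_def using not_adj AA by auto
  have idsym: "internally_disjoint u v q p" if "internally_disjoint u v p q" for p q
    using that unfolding internally_disjoint_def by blast
  have dxx: "internally_disjoint u v (pX A A' B C k) (pX A A' B C k')" if "k \<in> J" "k' \<in> J" "k \<noteq> k'" for k k'
    unfolding u_def v_def using dXX J that by blast
  have dxz: "internally_disjoint u v (pX A A' B C k) Zp" if "k \<in> J" for k
    unfolding u_def v_def Zp_def using dXZ J[OF that] k0 by metis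
  have dxb: "internally_disjoint u v (pX A A' B C k) Bp" if "k \<in> J" for k
    unfolding u_def v_def Bp_def using dXB J[OF that] by blast
  have dxd: "internally_disjoint u v (pX A A' B C k) D" if "k \<in> J" for k
    unfolding u_def v_def D_def using dXD J[OF that] k0 nkA[OF that] by blast
  have dzb: "internally_disjoint u v Zp Bp" unfolding u_def v_def Zp_def Bp_def using dZB k0 by blast
  have dzd: "internally_disjoint u v Zp D" unfolding u_def v_def Zp_def D_def using dZD k0 by blast
  have dbd: "internally_disjoint u v Bp D" unfolding u_def v_def Bp_def D_def using dBD by blast
  have disj: "internally_disjoint u v p q" if "p \<in> P" "q \<in> P" "p \<noteq> q" for p q
    using that dxx dxz dxb dxd dzb dzd dbd idsym unfolding P_def XS_def by auto
  have paths: "e3c_path r s t u v p" if "p \<in> P" for p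
    using that pathX pathD pathZ pathB unfolding P_def XS_def by auto
  have neq: "p \<noteq> q" if "p \<in> P" "q \<in> P" "internally_disjoint u v p q" for p q
    using path_neq[OF paths[OF that(1)] paths[OF that(2)] that(3) nadj] .
  have PP: "D \<in> P" "Zp \<in> P" "Bp \<in> P" "XS \<subseteq> P" unfolding P_def by auto
  have inj: "inj_on (pX A A' B C) J"
  proof (rule inj_onI)
    fix k k' assume kk: "k \<in> J" "k' \<in> J" "pX A A' B C k = pX A A' B C k'"
    show "k = k'"
    proof (rule ccontr)
      assume "k \<noteq> k'"
      then have "pX A A' B C k \<noteq> pX A A' B C k'"
        using neq dxx kk PP unfolding XS_def by blast
      then show False using kk by simp
    qed
  qed
  have fJ: "finite J" unfolding J_def using finite_I0 by simp
  have cJ: "card J = 2 * r - 1" unfolding J_def using card_I0 k0 finite_I0 by simp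
  have cXS: "card XS = 2 * r - 1" unfolding XS_def using card_image[OF inj] cJ by simp
  have fXS: "finite XS" unfolding XS_def using fJ by simp
  have "Bp \<notin> XS" using neq dxb PP unfolding XS_def by blast
  moreover have "Zp \<notin> insert Bp XS" using neq dxz dzb PP unfolding XS_def by blast
  moreover have "D \<notin> insert Zp (insert Bp XS)" using neq dxd dzd dbd PP idsym unfolding XS_def by blast
  ultimately have cP: "card P = 2 * r + 2" unfolding P_def using fXS cXS r1 by simp
  have lens: "path_len p \<le> r + 6" if "p \<in> P" for p
    using that pX_len pD_len[OF k0] pZ_len[OF k0] pB_len J
    unfolding P_def XS_def D_def Zp_def Bp_def by auto
  show ?thesis unfolding good_def
    using cP paths disj lens unfolding u_def v_def by blast
qed

end

definition qP0 :: "nat list \<Rightarrow> nat list \<Rightarrow> nat list \<Rightarrow> nat list \<Rightarrow> vert list" where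
  "qP0 A A' B C = [(A,B,C,0)] @ seg B C A A' @ [(A',B,C,1)]"

definition qPj :: "nat list \<Rightarrow> nat list \<Rightarrow> nat list \<Rightarrow> nat list \<Rightarrow> nat \<times> nat \<Rightarrow> vert list" where
  "qPj A A' B C j = [(A,B,C,0), (A,B,nb C j,0), (A,B,nb C j,1), (A,nb B j,nb C j,1)]
     @ seg (nb B j) (nb C j) A A' @ [(A',nb B j,nb C j,0), (A',nb B j,C,0), (A',nb B j,C,1), (A',B,C,1)]"

definition qPk :: "nat list \<Rightarrow> nat list \<Rightarrow> nat list \<Rightarrow> nat list \<Rightarrow> nat \<times> nat \<Rightarrow> vert list" where
  "qPk A A' B C k = [(A,B,C,0), (A,B,nb C k,0)]
     @ seg B (nb C k) A A' @ [(A',B,nb C k,0), (A',B,C,0), (A',B,C,1)]"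

definition qQ :: "nat list \<Rightarrow> nat list \<Rightarrow> nat list \<Rightarrow> nat list \<Rightarrow> nat \<times> nat \<Rightarrow> vert list" where
  "qQ A A' B C k = [(A,B,C,0), (A,B,C,1), (A,nb B k,C,1)]
     @ seg (nb B k) C A A' @ [(A',nb B k,C,1), (A',B,C,1)]"

context
  fixes r s t :: nat and A A' B C :: "nat list"
  assumes r1: "1 \<le> r" and rs: "r \<le> s" and rt: "r \<le> t"
    and A: "A \<in> ternary_strings r" and A': "A' \<in> ternary_strings r"
    and B: "B \<in> ternary_strings s" and C: "C \<in> ternary_strings t" and AA: "A \<noteq> A'"
begin

lemma nbC2: "k \<in> I0 r \<Longrightarrow> nb C k \<in> ternary_strings t"
  using nb_ts[OF C] rt by blast

lemma nbB2: "k \<in> I0 r \<Longrightarrow> nb B k \<in> ternary_strings s"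
  using nb_ts[OF B] rs by blast

lemma dC2: "k \<in> I0 r \<Longrightarrow> differ_one C (nb C k)"
  using nb_differ[OF C] rt by blast

lemma dB2: "k \<in> I0 r \<Longrightarrow> differ_one B (nb B k)"
  using nb_differ[OF B] rs by blast

lemma neC2: "k \<in> I0 r \<Longrightarrow> nb C k \<noteq> C"
  using nb_neq[OF C] rt by blast

lemma neB2: "k \<in> I0 r \<Longrightarrow> nb B k \<noteq> B"
  using nb_neq[OF B] rs by blast

lemma injC2: "k \<in> I0 r \<Longrightarrow> k' \<in> I0 r \<Longrightarrow> nb C k = nb C k' \<longleftrightarrow> k = k'"
  using nb_inj[OF C] rt by blast

lemma injB2: "k \<in> I0 r \<Longrightarrow> k' \<in> I0 r \<Longrightarrow> nb B k = nb B k' \<longleftrightarrow> k = k'"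
  using nb_inj[OF B] rs by blast

lemma qP0_path: "e3c_path r s t (A,B,C,0) (A',B,C,1) (qP0 A A' B C)"
proof -
  note sp = seg_props[OF A A' B C]
  show ?thesis unfolding qP0_def
  proof (rule mk_path)
    show "e3c_adj r s t (last [(A,B,C,0)]) (hd (seg B C A A'))"
      using sp by (simp add: adjE0 A B C)
    show "e3c_adj r s t (last (seg B C A A')) (hd [(A',B,C,1)])"
      using sp by (simp add: adjE0 A' B C)
    show "distinct ([(A,B,C,0)] @ seg B C A A' @ [(A',B,C,1)])"
      using sp by auto
  qed (use sp in auto)
qed

lemma qP0_len: "path_len (qP0 A A' B C) \<le> r + 8"
  using seg_props(6)[OF A A' B C] unfolding qP0_def path_len_def by simp

lemma qPj_path: "j \<in> I0 r \<Longrightarrow> e3c_path r s t (A,B,C,0) (A',B,C,1) (qPj A A' B C j)"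
proof -
  assume j: "j \<in> I0 r"
  note sp = seg_props[OF A A' nbB2[OF j] nbC2[OF j]]
  have f: "nb B j \<in> ternary_strings s" "nb C j \<in> ternary_strings t" "differ_one B (nb B j)"
    "differ_one C (nb C j)" "differ_one (nb B j) B" "differ_one (nb C j) C"
    using nbB2[OF j] nbC2[OF j] dB2[OF j] dC2[OF j] differ_one_sym by auto
  show ?thesis unfolding qPj_def
  proof (rule mk_path)
    show "successively (e3c_adj r s t) [(A,B,C,0), (A,B,nb C j,0), (A,B,nb C j,1), (A,nb B j,nb C j,1)]"
      using f by (simp add: adjE0 adjE1 adjE2 adjE2' A B C)
    show "successively (e3c_adj r s t) [(A',nb B j,nb C j,0), (A',nb B j,C,0), (A',nb B j,C,1), (A',B,C,1)]"
      using f by (simp add: adjE0 adjE1 adjE2 adjE2' A' B C)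
    show "e3c_adj r s t (last [(A,B,C,0), (A,B,nb C j,0), (A,B,nb C j,1), (A,nb B j,nb C j,1)])
       (hd (seg (nb B j) (nb C j) A A'))"
      using sp f by (simp add: adjE0 A)
    show "e3c_adj r s t (last (seg (nb B j) (nb C j) A A'))
       (hd [(A',nb B j,nb C j,0), (A',nb B j,C,0), (A',nb B j,C,1), (A',B,C,1)])"
      using sp f by (simp add: adjE0 A')
    show "distinct ([(A,B,C,0), (A,B,nb C j,0), (A,B,nb C j,1), (A,nb B j,nb C j,1)]
       @ seg (nb B j) (nb C j) A A' @ [(A',nb B j,nb C j,0), (A',nb B j,C,0), (A',nb B j,C,1), (A',B,C,1)])"
      using sp neB2[OF j] neC2[OF j] AA by auto
  qed (use sp in auto)
qed

lemma qPj_len: "j \<in> I0 r \<Longrightarrow> path_len (qPj A A' B C j) \<le> r + 8"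
  using seg_props(6)[OF A A' nbB2 nbC2, of j j] unfolding qPj_def path_len_def by simp

lemma qPk_path: "k \<in> I0 r \<Longrightarrow> e3c_path r s t (A,B,C,0) (A',B,C,1) (qPk A A' B C k)"
proof -
  assume k: "k \<in> I0 r"
  note sp = seg_props[OF A A' B nbC2[OF k]]
  have f: "nb C k \<in> ternary_strings t" "differ_one C (nb C k)" "differ_one (nb C k) C"
    using nbC2[OF k] dC2[OF k] differ_one_sym by auto
  show ?thesis unfolding qPk_def
  proof (rule mk_path)
    show "successively (e3c_adj r s t) [(A,B,C,0), (A,B,nb C k,0)]"
      using f by (simp add: adjE1 A B C)
    show "successively (e3c_adj r s t) [(A',B,nb C k,0), (A',B,C,0), (A',B,C,1)]"
      using f by (simp add: adjE0 adjE1 A' B C)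
    show "e3c_adj r s t (last [(A,B,C,0), (A,B,nb C k,0)]) (hd (seg B (nb C k) A A'))"
      using sp f by (simp add: adjE0 A B)
    show "e3c_adj r s t (last (seg B (nb C k) A A')) (hd [(A',B,nb C k,0), (A',B,C,0), (A',B,C,1)])"
      using sp f by (simp add: adjE0 A' B)
    show "distinct ([(A,B,C,0), (A,B,nb C k,0)]
       @ seg B (nb C k) A A' @ [(A',B,nb C k,0), (A',B,C,0), (A',B,C,1)])"
      using sp neC2[OF k] AA by auto
  qed (use sp in auto)
qed

lemma qPk_len: "k \<in> I0 r \<Longrightarrow> path_len (qPk A A' B C k) \<le> r + 8"
  using seg_props(6)[OF A A' B nbC2, of k] unfolding qPk_def path_len_def by simp

lemma qQ_path: "k \<in> I0 r \<Longrightarrow> e3c_path r s t (A,B,C,0) (A',B,C,1) (qQ A A' B C k)"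
proof -
  assume k: "k \<in> I0 r"
  note sp = seg_props[OF A A' nbB2[OF k] C]
  have f: "nb B k \<in> ternary_strings s" "differ_one B (nb B k)" "differ_one (nb B k) B"
    using nbB2[OF k] dB2[OF k] differ_one_sym by auto
  show ?thesis unfolding qQ_def
  proof (rule mk_path)
    show "successively (e3c_adj r s t) [(A,B,C,0), (A,B,C,1), (A,nb B k,C,1)]"
      using f by (simp add: adjE0 adjE2 adjE2' A B C)
    show "successively (e3c_adj r s t) [(A',nb B k,C,1), (A',B,C,1)]"
      using f by (simp add: adjE2 adjE2' A' B C)
    show "e3c_adj r s t (last [(A,B,C,0), (A,B,C,1), (A,nb B k,C,1)]) (hd (seg (nb B k) C A A'))"
      using sp f by (simp add: adjE0 A C)
    show "e3c_adj r s t (last (seg (nb B k) C A A')) (hd [(A',nb B k,C,1), (A',B,C,1)])"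
      using sp f by (simp add: adjE0 A' C)
    show "distinct ([(A,B,C,0), (A,B,C,1), (A,nb B k,C,1)]
       @ seg (nb B k) C A A' @ [(A',nb B k,C,1), (A',B,C,1)])"
      using sp neB2[OF k] AA by auto
  qed (use sp in auto)
qed

lemma qQ_len: "k \<in> I0 r \<Longrightarrow> path_len (qQ A A' B C k) \<le> r + 8"
  using seg_props(6)[OF A A' nbB2 C, of k] unfolding qQ_def path_len_def by simp

lemma e0j: "j \<in> I0 r \<Longrightarrow> internally_disjoint (A,B,C,0) (A',B,C,1) (qP0 A A' B C) (qPj A A' B C j)"
proof -
  assume k: "j \<in> I0 r"
  show ?thesis unfolding internally_disjoint_def qP0_def qPj_def seg_def using neB2[OF k] neC2[OF k] AA by auto
qed

lemma e0k: "k \<in> I0 r \<Longrightarrow> internally_disjoint (A,B,C,0) (A',B,C,1) (qP0 A A' B C) (qPk A A' B C k)"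
proof -
  assume k: "k \<in> I0 r"
  show ?thesis unfolding internally_disjoint_def qP0_def qPk_def seg_def using neC2[OF k] AA by auto
qed

lemma e0q: "k \<in> I0 r \<Longrightarrow> internally_disjoint (A,B,C,0) (A',B,C,1) (qP0 A A' B C) (qQ A A' B C k)"
proof -
  assume k: "k \<in> I0 r"
  show ?thesis unfolding internally_disjoint_def qP0_def qQ_def seg_def using neB2[OF k] AA by auto
qed

lemma ejj: "j \<in> I0 r \<Longrightarrow> j' \<in> I0 r \<Longrightarrow> j \<noteq> j' \<Longrightarrow>
  internally_disjoint (A,B,C,0) (A',B,C,1) (qPj A A' B C j) (qPj A A' B C j')"
proof -
  assume j: "j \<in> I0 r" and j': "j' \<in> I0 r" and jj: "j \<noteq> j'"
  have f: "nb B j \<noteq> nb B j'" "nb C j \<noteq> nb C j'" using injB2[OF j j'] injC2[OF j j'] jj by auto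
  show ?thesis unfolding internally_disjoint_def qPj_def seg_def
    using f neB2[OF j] neB2[OF j'] neC2[OF j] neC2[OF j'] AA by auto
qed

lemma ejk: "j \<in> I0 r \<Longrightarrow> k \<in> I0 r \<Longrightarrow> j \<noteq> k \<Longrightarrow>
  internally_disjoint (A,B,C,0) (A',B,C,1) (qPj A A' B C j) (qPk A A' B C k)"
proof -
  assume j: "j \<in> I0 r" and k: "k \<in> I0 r" and jk: "j \<noteq> k"
  have f: "nb C j \<noteq> nb C k" using injC2[OF j k] jk by auto
  show ?thesis unfolding internally_disjoint_def qPj_def qPk_def seg_def
    using f neB2[OF j] neC2[OF j] neC2[OF k] AA by auto
qed

lemma ejq: "j \<in> I0 r \<Longrightarrow> k \<in> I0 r \<Longrightarrow> j \<noteq> k \<Longrightarrow>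
  internally_disjoint (A,B,C,0) (A',B,C,1) (qPj A A' B C j) (qQ A A' B C k)"
proof -
  assume j: "j \<in> I0 r" and k: "k \<in> I0 r" and jk: "j \<noteq> k"
  have f: "nb B j \<noteq> nb B k" using injB2[OF j k] jk by auto
  show ?thesis unfolding internally_disjoint_def qPj_def qQ_def seg_def
    using f neB2[OF j] neC2[OF j] neB2[OF k] AA by auto
qed

lemma ekq: "k \<in> I0 r \<Longrightarrow>
  internally_disjoint (A,B,C,0) (A',B,C,1) (qPk A A' B C k) (qQ A A' B C k)"
proof -
  assume k: "k \<in> I0 r"
  show ?thesis unfolding internally_disjoint_def qPk_def qQ_def seg_def using neB2[OF k] neC2[OF k] AA by auto
qed

lemma caseII: "\<exists>P. good r s t (A,B,C,0) (A',B,C,1) (r+8) P"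
proof -
  define k0 where "k0 = (0::nat, 1::nat)"
  have k0: "k0 \<in> I0 r" unfolding k0_def I0_def using r1 by auto
  define u where "u = (A,B,C,0::nat)"
  define v where "v = (A',B,C,1::nat)"
  define D where "D = qP0 A A' B C"
  define Zp where "Zp = qPk A A' B C k0"
  define Bp where "Bp = qQ A A' B C k0"
  define J where "J = I0 r - {k0}"
  define XS where "XS = qPj A A' B C ` J"
  define P where "P = insert D (insert Zp (insert Bp XS))"
  have J: "k \<in> I0 r" "k \<noteq> k0" if "k \<in> J" for k using that unfolding J_def by auto
  have pathX: "e3c_path r s t u v (qPj A A' B C k)" if "k \<in> J" for k
    unfolding u_def v_def using qPj_path J[OF that] by blast
  have pathD: "e3c_path r s t u v D" unfolding u_def v_def D_def using qP0_path by blast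
  have pathZ: "e3c_path r s t u v Zp" unfolding u_def v_def Zp_def using qPk_path k0 by blast
  have pathB: "e3c_path r s t u v Bp" unfolding u_def v_def Bp_def using qQ_path k0 by blast
  have nadj: "\<not> e3c_adj r s t u v" "u \<noteq> v" unfolding u_def v_def using not_adj AA by auto
  have idsym: "internally_disjoint u v q p" if "internally_disjoint u v p q" for p q
    using that unfolding internally_disjoint_def by blast
  have dxx: "internally_disjoint u v (qPj A A' B C k) (qPj A A' B C k')" if "k \<in> J" "k' \<in> J" "k \<noteq> k'" for k k'
    unfolding u_def v_def using ejj J that by blast
  have dxz: "internally_disjoint u v (qPj A A' B C k) Zp" if "k \<in> J" for k
    unfolding u_def v_def Zp_def using ejk J[OF that] k0 by metis
  have dxb: "internally_disjoint u v (qPj A A' B C k) Bp" if "k \<in> J" for k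
    unfolding u_def v_def Bp_def using ejq J[OF that] k0 by metis
  have dxd: "internally_disjoint u v D (qPj A A' B C k)" if "k \<in> J" for k
    unfolding u_def v_def D_def using e0j J[OF that] by blast
  have dzb: "internally_disjoint u v Zp Bp" unfolding u_def v_def Zp_def Bp_def using ekq k0 by blast
  have dzd: "internally_disjoint u v D Zp" unfolding u_def v_def Zp_def D_def using e0k k0 by blast
  have dbd: "internally_disjoint u v D Bp" unfolding u_def v_def Bp_def D_def using e0q k0 by blast
  have disj: "internally_disjoint u v p q" if "p \<in> P" "q \<in> P" "p \<noteq> q" for p q
    using that dxx dxz dxb dxd dzb dzd dbd idsym unfolding P_def XS_def by auto
  have paths: "e3c_path r s t u v p" if "p \<in> P" for p
    using that pathX pathD pathZ pathB unfolding P_def XS_def by auto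
  have neq: "p \<noteq> q" if "p \<in> P" "q \<in> P" "internally_disjoint u v p q" for p q
    using path_neq[OF paths[OF that(1)] paths[OF that(2)] that(3) nadj] .
  have PP: "D \<in> P" "Zp \<in> P" "Bp \<in> P" "XS \<subseteq> P" unfolding P_def by auto
  have inj: "inj_on (qPj A A' B C) J"
  proof (rule inj_onI)
    fix k k' assume kk: "k \<in> J" "k' \<in> J" "qPj A A' B C k = qPj A A' B C k'"
    show "k = k'"
    proof (rule ccontr)
      assume "k \<noteq> k'"
      then have "qPj A A' B C k \<noteq> qPj A A' B C k'"
        using neq dxx kk PP unfolding XS_def by blast
      then show False using kk by simp
    qed
  qed
  have fJ: "finite J" unfolding J_def using finite_I0 by simp
  have cJ: "card J = 2 * r - 1" unfolding J_def using card_I0 k0 finite_I0 by simp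
  have cXS: "card XS = 2 * r - 1" unfolding XS_def using card_image[OF inj] cJ by simp
  have fXS: "finite XS" unfolding XS_def using fJ by simp
  have "Bp \<notin> XS" using neq dxb PP unfolding XS_def by blast
  moreover have "Zp \<notin> insert Bp XS" using neq dxz dzb PP unfolding XS_def by blast
  moreover have "D \<notin> insert Zp (insert Bp XS)" using neq dxd dzd dbd PP idsym unfolding XS_def by blast
  ultimately have cP: "card P = 2 * r + 2" unfolding P_def using fXS cXS r1 by simp
  have lens: "path_len p \<le> r + 8" if "p \<in> P" for p
    using that qPj_len qP0_len qPk_len[OF k0] qQ_len[OF k0] J
    unfolding P_def XS_def D_def Zp_def Bp_def by auto
  show ?thesis unfolding good_def
    using cP paths disj lens unfolding u_def v_def by blast
qed

end
lemma nn_aux: "{0::nat,1} \<noteq> {0,2}" "{0::nat,1} \<noteq> {1,2}"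
  by (simp_all add: doubleton_eq_iff)

theorem lemma18:
  fixes r s t :: nat and A B C A' B' C' :: "nat list" and d d' :: nat
  assumes "1 \<le> r" and "r \<le> s" and "s \<le> t"
    and "(A,B,C,d) \<in> e3c_verts r s t" and "(A',B',C',d') \<in> e3c_verts r s t"
    and "A \<noteq> A'" and "B = B'" and "C = C'" and "d \<noteq> d'"
  shows "\<exists>P :: vert list set.
           card P = 2 * r + 2 \<and>
           (\<forall>p\<in>P. e3c_path r s t (A,B,C,d) (A',B',C',d') p) \<and>
           (\<forall>p\<in>P. \<forall>q\<in>P. p \<noteq> q \<longrightarrow> internally_disjoint (A,B,C,d) (A',B',C',d') p q) \<and>
           ({d,d'} = {0,1} \<longrightarrow> (\<forall>p\<in>P. path_len p \<le> r + 8)) \<and>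
           (({d,d'} = {0,2} \<or> {d,d'} = {1,2}) \<longrightarrow> (\<forall>p\<in>P. path_len p \<le> r + 6))"
proof -
  have r1: "1 \<le> r" and rs: "r \<le> s" and rt: "r \<le> t" and s1: "1 \<le> s" and t1: "1 \<le> t"
    using assms(1-3) by auto
  have A: "A \<in> ternary_strings r" and B: "B \<in> ternary_strings s" and C: "C \<in> ternary_strings t"
    and d: "d \<in> {0,1,2}" using assms(4) by auto
  have A': "A' \<in> ternary_strings r" and d': "d' \<in> {0,1,2}" using assms(5) by auto
  have AA: "A \<noteq> A'" and AA': "A' \<noteq> A" using assms(6) by auto
  have main: "\<exists>P L. good r s t (A,B,C,d) (A',B,C,d') L P \<and> (L \<le> r + 6 \<or> ({d,d'} = {0,1} \<and> L \<le> r + 8))"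
  proof -
    have c20: "\<exists>P. good r s t (A,B,C,2) (A',B,C,0) (r+6) P"
      using caseI[OF r1 rt s1 A A' B C AA] .
    have c02: "\<exists>P. good r s t (A,B,C,0) (A',B,C,2) (r+6) P"
      using caseI[OF r1 rt s1 A' A B C AA'] good_rev by blast
    have c21: "\<exists>P. good r s t (A,B,C,2) (A',B,C,1) (r+6) P"
    proof -
      obtain P where "good r t s (A,C,B,2) (A',C,B,0) (r+6) P"
        using caseI[OF r1 rs t1 A A' C B AA] by blast
      then have "good r s t (sig (A,C,B,2)) (sig (A',C,B,0)) (r+6) (map sig ` P)" by (rule good_sig)
      then show ?thesis by auto
    qed
    have c12: "\<exists>P. good r s t (A,B,C,1) (A',B,C,2) (r+6) P"
    proof -
      obtain P where "good r t s (A',C,B,2) (A,C,B,0) (r+6) P"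
        using caseI[OF r1 rs t1 A' A C B AA'] by blast
      then have "good r s t (sig (A',C,B,2)) (sig (A,C,B,0)) (r+6) (map sig ` P)" by (rule good_sig)
      then have "good r s t (A',B,C,2) (A,B,C,1) (r+6) (map sig ` P)" by simp
      then show ?thesis using good_rev by blast
    qed
    have c01: "\<exists>P. good r s t (A,B,C,0) (A',B,C,1) (r+8) P"
      using caseII[OF r1 rs rt A A' B C AA] .
    have c10: "\<exists>P. good r s t (A,B,C,1) (A',B,C,0) (r+8) P"
      using caseII[OF r1 rs rt A' A B C AA'] good_rev by blast
    have "d = 0 \<and> d' = 1 \<or> d = 1 \<and> d' = 0 \<or> d = 0 \<and> d' = 2 \<or> d = 2 \<and> d' = 0 \<or> d = 1 \<and> d' = 2 \<or> d = 2 \<and> d' = 1"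
      using d d' assms(9) by auto
    then show ?thesis
    proof (elim disjE)
      assume "d = 0 \<and> d' = 1"
      then have dd: "d = 0" "d' = 1" by auto
      obtain P where "good r s t (A,B,C,0) (A',B,C,1) (r+8) P" using c01 by blast
      then have G: "good r s t (A,B,C,d) (A',B,C,d') (r+8) P" unfolding dd .
      have S: "{d,d'} = {0::nat,1}" unfolding dd by (rule refl)
      show ?thesis using G S by (intro exI[of _ P] exI[of _ "r+8"] conjI disjI2 order_refl) assumption+
    next
      assume "d = 1 \<and> d' = 0"
      then have dd: "d = 1" "d' = 0" by auto
      obtain P where "good r s t (A,B,C,1) (A',B,C,0) (r+8) P" using c10 by blast
      then have G: "good r s t (A,B,C,d) (A',B,C,d') (r+8) P" unfolding dd .
      have S: "{d,d'} = {0::nat,1}" unfolding dd by (rule insert_commute)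
      show ?thesis using G S by (intro exI[of _ P] exI[of _ "r+8"] conjI disjI2 order_refl) assumption+
    next
      assume "d = 0 \<and> d' = 2"
      then have dd: "d = 0" "d' = 2" by auto
      obtain P where "good r s t (A,B,C,0) (A',B,C,2) (r+6) P" using c02 by blast
      then have G: "good r s t (A,B,C,d) (A',B,C,d') (r+6) P" unfolding dd .
      show ?thesis using G by (intro exI[of _ P] exI[of _ "r+6"] conjI disjI1 order_refl) assumption
    next
      assume "d = 2 \<and> d' = 0"
      then have dd: "d = 2" "d' = 0" by auto
      obtain P where "good r s t (A,B,C,2) (A',B,C,0) (r+6) P" using c20 by blast
      then have G: "good r s t (A,B,C,d) (A',B,C,d') (r+6) P" unfolding dd .
      show ?thesis using G by (intro exI[of _ P] exI[of _ "r+6"] conjI disjI1 order_refl) assumption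
    next
      assume "d = 1 \<and> d' = 2"
      then have dd: "d = 1" "d' = 2" by auto
      obtain P where "good r s t (A,B,C,1) (A',B,C,2) (r+6) P" using c12 by blast
      then have G: "good r s t (A,B,C,d) (A',B,C,d') (r+6) P" unfolding dd .
      show ?thesis using G by (intro exI[of _ P] exI[of _ "r+6"] conjI disjI1 order_refl) assumption
    next
      assume "d = 2 \<and> d' = 1"
      then have dd: "d = 2" "d' = 1" by auto
      obtain P where "good r s t (A,B,C,2) (A',B,C,1) (r+6) P" using c21 by blast
      then have G: "good r s t (A,B,C,d) (A',B,C,d') (r+6) P" unfolding dd .
      show ?thesis using G by (intro exI[of _ P] exI[of _ "r+6"] conjI disjI1 order_refl) assumption
    qed
  qed
  then obtain P L where g: "good r s t (A,B,C,d) (A',B,C,d') L P"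
    and L: "L \<le> r + 6 \<or> ({d,d'} = {0,1} \<and> L \<le> r + 8)" by blast
  have nn: "{d,d'} \<noteq> {0::nat,1}" if "{d,d'} = {0,2} \<or> {d,d'} = {1,2}"
  proof
    assume eq: "{d,d'} = {0::nat,1}"
    have "{0::nat,1} = {0,2} \<or> {0::nat,1} = {1,2}" using that unfolding eq .
    then show False using nn_aux by blast
  qed
  note G = g[unfolded good_def]
  note c = G[THEN conjunct1] and p = G[THEN conjunct2, THEN conjunct1]
    and q = G[THEN conjunct2, THEN conjunct2, THEN conjunct1]
    and l = G[THEN conjunct2, THEN conjunct2, THEN conjunct2]
  have L8: "L \<le> r + 8" using L by (elim disjE conjE) linarith+
  have l1: "{d,d'} = {0,1} \<longrightarrow> (\<forall>p\<in>P. path_len p \<le> r + 8)"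
  proof (intro impI ballI)
    fix p assume "p \<in> P"
    then have "path_len p \<le> L" using l by blast
    then show "path_len p \<le> r + 8" using L8 by linarith
  qed
  have l2: "({d,d'} = {0,2} \<or> {d,d'} = {1,2}) \<longrightarrow> (\<forall>p\<in>P. path_len p \<le> r + 6)"
  proof (intro impI ballI)
    fix p assume h: "{d,d'} = {0,2} \<or> {d,d'} = {1,2}" and "p \<in> P"
    have nX: "\<not> ({d,d'} = {0::nat,1})" by (rule nn[OF h])
    from L have "L \<le> r + 6"
    proof
      assume "L \<le> r + 6" then show ?thesis .
    next
      assume "{d,d'} = {0,1} \<and> L \<le> r + 8"
      then have "{d,d'} = {0::nat,1}" by (rule conjunct1)
      with nX show ?thesis by (rule notE)
    qed
    moreover have "path_len p \<le> L" using l \<open>p \<in> P\<close> by blast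
    ultimately show "path_len p \<le> r + 6" by linarith
  qed
  show ?thesis unfolding assms(7,8)[symmetric] by (rule exI[of _ P]) (intro conjI c p q l1 l2)
qed

end
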